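(* Let $E=(E^0,E^1,r,s)$ be a graph and $H\subseteq E^0$ a saturated hereditary subset. Then $|\widetilde{\partial}E|=|\widetilde{\partial}\,\overline{E}_{(H,\emptyset)}|+|\widetilde{\partial}\,(E\setminus(H,\emptyset))|$.
   Context: A graph $E=(E^0,E^1,r,s)$ has vertex set $E^0$, edge set $E^1$, range and source maps; no countability assumed. A vertex is singular if it emits no edges or infinitely many edges, regular otherwise. Boundary paths $\partial E$: infinite paths $e_1e_2\cdots$ ($r(e_i)=s(e_{i+1})$) together with finite paths (including vertices as length-$0$ paths) whose range is singular. The shift $\sigma_E$ removes the first edge (fixes vertices; sends a single edge $e$ to $r(e)$); $\alpha,\beta\in\partial E$ are shift-tail equivalent if $\sigma_E^m(\alpha)=\sigma_E^n(\beta)$ for some $m,n\in\mathbb{N}$, and $\widetilde{\partial}E$ is the set of shift-tail equivalence classes. $H\subseteq E^0$ is hereditary if $s(e)\in H\Rightarrow r(e)\in H$; saturated if every regular $v$ with $r(s^{-1}(v))\subseteq H$ lies in $H$. Breaking vertices: $B_H=\{v\in E^0\text{ singular}:0<|s^{-1}(v)\cap r^{-1}(E^0\setminus H)|<\infty\}$. The graph $E\setminus(H,\emptyset)$ has vertex set $(E^0\setminus H)\sqcup\{w_v:v\in B_H\}$ and edge set $(E^1\setminus r^{-1}(H))\sqcup\{f_e:e\in E^1,\ r(e)\in B_H\}$, with $r,s$ as in $E$ on the old edges, and $s(f_e)=s(e)$, $r(f_e)=w_{r(e)}$. Let $F_1(H,\emptyset)=\{\alpha=e_1\cdots e_n\in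 E^*: n\ge1,\ r(e_n)\in H,\ s(e_n)\notin H\}$ and let $\overline{F}_1(H,\emptyset)=\{\overline{\alpha}:\alpha\in F_1(H,\emptyset)\}$ be a disjoint copy. The graph $\overline{E}_{(H,\emptyset)}$ has vertex set $H\sqcup F_1(H,\emptyset)$ and edge set $\{e\in E^1:s(e)\in H\}\sqcup\overline{F}_1(H,\emptyset)$, with $r,s$ as in $E$ on the edges from $E$, and $s(\overline{\alpha})=\alpha$, $r(\overline{\alpha})=r(\alpha)$. *)

theory Defs
  imports Main "HOL-Library.Equipollence"
begin

record ('v, 'e) dgraph =
  verts :: "'v set"
  edges :: "'e set"
  rng   :: "'e \<Rightarrow> 'v"
  src   :: "'e \<Rightarrow> 'v"

definition wf_graph :: "('v, 'e) dgraph \<Rightarrow> bool" where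
  "wf_graph E \<longleftrightarrow> (\<forall>e\<in>edges E. rng E e \<in> verts E \<and> src E e \<in> verts E)"

definition emits :: "('v, 'e) dgraph \<Rightarrow> 'v \<Rightarrow> 'e set" where
  "emits E v = {e \<in> edges E. src E e = v}"

definition singular :: "('v, 'e) dgraph \<Rightarrow> 'v \<Rightarrow> bool" where
  "singular E v \<longleftrightarrow> v \<in> verts E \<and> (emits E v = {} \<or> infinite (emits E v))"

definition regular :: "('v, 'e) dgraph \<Rightarrow> 'v \<Rightarrow> bool" where
  "regular E v \<longleftrightarrow> v \<in> verts E \<and> \<not> singular E v"

definition fin_path :: "('v, 'e) dgraph \<Rightarrow> 'e list \<Rightarrow> bool" where
  "fin_path E es \<longleftrightarrow> es \<noteq> [] \<and> set es \<subseteq> edges E \<and>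
     (\<forall>i. Suc i < length es \<longrightarrow> rng E (es ! i) = src E (es ! Suc i))"

definition inf_path :: "('v, 'e) dgraph \<Rightarrow> (nat \<Rightarrow> 'e) \<Rightarrow> bool" where
  "inf_path E f \<longleftrightarrow> (\<forall>i. f i \<in> edges E \<and> rng E (f i) = src E (f (Suc i)))"

text \<open>Paths: vertices (length-0 paths), nonempty finite paths, infinite paths.\<close>
datatype ('v, 'e) bpath = PV 'v | PF "'e list" | PI "nat \<Rightarrow> 'e"

definition boundary :: "('v, 'e) dgraph \<Rightarrow> ('v, 'e) bpath set" where
  "boundary E =
     {PV v | v. singular E v}
   \<union> {PF es | es. fin_path E es \<and> singular E (rng E (last es))}
   \<union> {PI f | f. inf_path E f}"

fun shift :: "('v, 'e) dgraph \<Rightarrow> ('v, 'e) bpath \<Rightarrow> ('v, 'e) bpath" where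
  "shift E (PV v) = PV v"
| "shift E (PF []) = PF []"
| "shift E (PF [e]) = PV (rng E e)"
| "shift E (PF (e # e' # es)) = PF (e' # es)"
| "shift E (PI f) = PI (\<lambda>i. f (Suc i))"

definition shift_tail :: "('v, 'e) dgraph \<Rightarrow> (('v, 'e) bpath \<times> ('v, 'e) bpath) set" where
  "shift_tail E = {(a, b). a \<in> boundary E \<and> b \<in> boundary E \<and>
      (\<exists>m n. (shift E ^^ m) a = (shift E ^^ n) b)}"

definition boundary_classes :: "('v, 'e) dgraph \<Rightarrow> ('v, 'e) bpath set set" where
  "boundary_classes E = boundary E // shift_tail E"

definition hereditary :: "('v, 'e) dgraph \<Rightarrow> 'v set \<Rightarrow> bool" where
  "hereditary E H \<longleftrightarrow> H \<subseteq> verts E \<and> (\<forall>e\<in>edges E. src E e \<in> H \<longrightarrow> rng E e \<in> H)"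

definition saturated :: "('v, 'e) dgraph \<Rightarrow> 'v set \<Rightarrow> bool" where
  "saturated E H \<longleftrightarrow> (\<forall>v. regular E v \<and> rng E ` emits E v \<subseteq> H \<longrightarrow> v \<in> H)"

definition breaking :: "('v, 'e) dgraph \<Rightarrow> 'v set \<Rightarrow> 'v set" where
  "breaking E H = {v. singular E v \<and>
      {e \<in> emits E v. rng E e \<notin> H} \<noteq> {} \<and> finite {e \<in> emits E v. rng E e \<notin> H}}"

text \<open>Vertices: Inl v for v not in H, Inr v for the new vertex w_v (v a breaking vertex).
  Edges: Inl e for old edges with range outside H, Inr e for the new edge f_e.\<close>
definition quot_graph :: "('v, 'e) dgraph \<Rightarrow> 'v set \<Rightarrow> ('v + 'v, 'e + 'e) dgraph" where
  "quot_graph E H =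
     \<lparr> verts = Inl ` (verts E - H) \<union> Inr ` breaking E H,
       edges = Inl ` {e \<in> edges E. rng E e \<notin> H} \<union> Inr ` {e \<in> edges E. rng E e \<in> breaking E H},
       rng = (\<lambda>x. case x of Inl e \<Rightarrow> Inl (rng E e) | Inr e \<Rightarrow> Inr (rng E e)),
       src = (\<lambda>x. case x of Inl e \<Rightarrow> Inl (src E e) | Inr e \<Rightarrow> Inl (src E e)) \<rparr>"

definition F1 :: "('v, 'e) dgraph \<Rightarrow> 'v set \<Rightarrow> 'e list set" where
  "F1 E H = {\<alpha>. fin_path E \<alpha> \<and> rng E (last \<alpha>) \<in> H \<and> src E (last \<alpha>) \<notin> H}"

text \<open>Vertices: Inl v for v in H, Inr alpha for alpha in F1.
  Edges: Inl e for edges with source in H, Inr alpha for the copy alpha-bar.\<close>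
definition restr_graph :: "('v, 'e) dgraph \<Rightarrow> 'v set \<Rightarrow> ('v + 'e list, 'e + 'e list) dgraph" where
  "restr_graph E H =
     \<lparr> verts = Inl ` H \<union> Inr ` F1 E H,
       edges = Inl ` {e \<in> edges E. src E e \<in> H} \<union> Inr ` F1 E H,
       rng = (\<lambda>x. case x of Inl e \<Rightarrow> Inl (rng E e) | Inr \<alpha> \<Rightarrow> Inl (rng E (last \<alpha>))),
       src = (\<lambda>x. case x of Inl e \<Rightarrow> Inl (src E e) | Inr \<alpha> \<Rightarrow> Inr \<alpha>) \<rparr>"

end

theory Submission
  imports Defs "HOL-Library.Equipollence"
begin


lemma fin_path_single[simp]: "fin_path E [e] \<longleftrightarrow> e \<in> edges E"
  by (auto simp: fin_path_def)

lemma fin_path_Cons2[simp]: "fin_path E (e#e'#es) \<longleftrightarrow> e \<in> edges E \<and> rng E e = src E e' \<and> fin_path E (e'#es)"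
proof
  assume a: "fin_path E (e#e'#es)"
  have "rng E e = src E e'" using a unfolding fin_path_def by (metis nth_Cons_0 nth_Cons_Suc length_Cons zero_less_Suc Suc_less_eq)
  moreover have "\<forall>i. Suc i < length (e'#es) \<longrightarrow> rng E ((e'#es) ! i) = src E ((e'#es) ! Suc i)"
  proof (intro allI impI)
    fix i assume "Suc i < length (e'#es)"
    then have "Suc (Suc i) < length (e#e'#es)" by simp
    then show "rng E ((e'#es) ! i) = src E ((e'#es) ! Suc i)" using a unfolding fin_path_def by (metis nth_Cons_Suc)
  qed
  ultimately show "e \<in> edges E \<and> rng E e = src E e' \<and> fin_path E (e'#es)" using a unfolding fin_path_def by auto
next
  assume a: "e \<in> edges E \<and> rng E e = src E e' \<and> fin_path E (e'#es)"
  show "fin_path E (e#e'#es)" unfolding fin_path_def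
  proof (intro conjI allI impI)
    show "set (e # e' # es) \<subseteq> edges E" using a unfolding fin_path_def by auto
  next
    fix i assume "Suc i < length (e#e'#es)"
    then show "rng E ((e#e'#es) ! i) = src E ((e#e'#es) ! Suc i)" using a unfolding fin_path_def
      by (cases i) auto
  qed simp
qed

lemma fin_path_Nil[simp]: "\<not> fin_path E []" by (simp add: fin_path_def)

lemma list_cases3: obtains "es = []" | e where "es = [e]" | e e' es' where "es = e#e'#es'"
  by (metis list.exhaust)

lemma shift_boundary: "x \<in> boundary E \<Longrightarrow> shift E x \<in> boundary E"
proof -
  assume x: "x \<in> boundary E"
  show ?thesis
  proof (cases x)
    case (PV v) then show ?thesis using x by simp
  next
    case (PF es) then show ?thesis using x
      by (cases es rule: list_cases3) (auto simp: boundary_def)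
  next
    case (PI f) then show ?thesis using x by (auto simp: boundary_def inf_path_def)
  qed
qed

lemma shift_pow_boundary: "x \<in> boundary E \<Longrightarrow> (shift E ^^ n) x \<in> boundary E"
  by (induction n) (auto intro: shift_boundary)

lemma shift_tail_refl: "x \<in> boundary E \<Longrightarrow> (x, x) \<in> shift_tail E"
  unfolding shift_tail_def by (auto intro: exI[of _ 0])

lemma shift_tail_shift: "x \<in> boundary E \<Longrightarrow> (x, (shift E ^^ k) x) \<in> shift_tail E"
proof -
  assume x: "x \<in> boundary E"
  have "(shift E ^^ k) x = (shift E ^^ 0) ((shift E ^^ k) x)" by simp
  then show ?thesis unfolding shift_tail_def using x shift_pow_boundary[OF x, of k] by blast
qed

lemma equiv_shift_tail: "equiv (boundary E) (shift_tail E)"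
proof (rule equivI)
  show "shift_tail E \<subseteq> boundary E \<times> boundary E" by (auto simp: shift_tail_def)
  show "refl_on (boundary E) (shift_tail E)"
    unfolding refl_on_def using shift_tail_refl by blast
  show "sym (shift_tail E)" unfolding sym_def shift_tail_def
  proof (clarsimp)
    fix x y m n assume "(shift E ^^ m) x = (shift E ^^ n) y"
    then have "(shift E ^^ n) y = (shift E ^^ m) x" by simp
    then show "\<exists>m n. (shift E ^^ m) y = (shift E ^^ n) x" by blast
  qed
  show "trans (shift_tail E)" unfolding trans_def shift_tail_def
  proof (clarsimp)
    fix a b c m n p q
    assume h1: "(shift E ^^ m) a = (shift E ^^ n) b" and h2: "(shift E ^^ p) b = (shift E ^^ q) c"
    have "(shift E ^^ (p + m)) a = (shift E ^^ (p + n)) b" by (simp add: funpow_add h1)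
    also have "\<dots> = (shift E ^^ (n + q)) c" by (simp add: funpow_add h2[symmetric] add.commute)
    finally show "\<exists>m n. (shift E ^^ m) a = (shift E ^^ n) c" by blast
  qed
qed


lemma quot_eqpoll:
  assumes S: "equiv B S" and R: "equiv X R" and AX: "A \<subseteq> X" and gB: "g ` B \<subseteq> A"
    and iff: "\<And>b b'. b \<in> B \<Longrightarrow> b' \<in> B \<Longrightarrow> (b, b') \<in> S \<longleftrightarrow> (g b, g b') \<in> R"
    and sur: "\<And>a. a \<in> A \<Longrightarrow> \<exists>b\<in>B. (g b, a) \<in> R"
  shows "B // S \<approx> A // R"
proof -
  define \<Phi> where "\<Phi> Y = R `` (g ` Y)" for Y
  have key: "\<Phi> (S``{b}) = R``{g b}" if b: "b \<in> B" for b
  proof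
    show "\<Phi> (S``{b}) \<subseteq> R``{g b}"
    proof
      fix y assume "y \<in> \<Phi> (S``{b})"
      then obtain b' where "(b, b') \<in> S" "(g b', y) \<in> R" unfolding \<Phi>_def by auto
      moreover have "b' \<in> B" using \<open>(b, b') \<in> S\<close> S by (auto simp: equiv_def)
      ultimately have "(g b, g b') \<in> R" "(g b', y) \<in> R" using iff b by auto
      then show "y \<in> R``{g b}" using R by (auto simp: equiv_def dest: transD)
    qed
    show "R``{g b} \<subseteq> \<Phi> (S``{b})"
      using b S unfolding \<Phi>_def by (auto simp: equiv_def refl_on_def)
  qed
  have "bij_betw \<Phi> (B//S) (A//R)"
  proof (rule bij_betw_imageI)
    show "inj_on \<Phi> (B//S)"
    proof (rule inj_onI)
      fix Y Z assume "Y \<in> B//S" "Z \<in> B//S" "\<Phi> Y = \<Phi> Z"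
      then obtain y z where y: "y \<in> B" "Y = S``{y}" and z: "z \<in> B" "Z = S``{z}" and e: "R``{g y} = R``{g z}"
        by (auto elim!: quotientE simp: key)
      have "g y \<in> X" "g z \<in> X" using gB AX y z by auto
      then have "(g y, g z) \<in> R" using e eq_equiv_class_iff[OF R] by simp
      then have "(y, z) \<in> S" using iff y z by auto
      then show "Y = Z" using y z equiv_class_eq[OF S] by simp
    qed
    show "\<Phi> ` (B//S) = A//R"
    proof
      show "\<Phi> ` (B//S) \<subseteq> A//R" using gB by (auto elim!: quotientE simp: key intro!: quotientI)
      show "A//R \<subseteq> \<Phi> ` (B//S)"
      proof
        fix Y assume "Y \<in> A//R"
        then obtain a where a: "a \<in> A" "Y = R``{a}" by (auto elim!: quotientE)
        then obtain b where b: "b \<in> B" "(g b, a) \<in> R" using sur by blast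
        then have "R``{g b} = R``{a}" using equiv_class_eq[OF R] by simp
        then have "Y = \<Phi> (S``{b})" using a b key by simp
        then show "Y \<in> \<Phi> ` (B//S)" using b by (auto intro: quotientI)
      qed
    qed
  qed
  then show ?thesis unfolding eqpoll_def by blast
qed

lemma disj_Un_eqpoll_Plus:
  assumes "A \<inter> B = {}" shows "A \<union> B \<approx> A <+> B"
proof -
  have "bij_betw (\<lambda>x. if x \<in> A then Inl x else Inr x) (A \<union> B) (A <+> B)"
    using assms by (auto simp: bij_betw_def inj_on_def image_iff)
  then show ?thesis unfolding eqpoll_def by blast
qed



fun inH :: "('v,'e) dgraph \<Rightarrow> 'v set \<Rightarrow> ('v,'e) bpath \<Rightarrow> bool" where
  "inH E H (PV v) = (v \<in> H)"
| "inH E H (PF es) = (rng E (last es) \<in> H)"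
| "inH E H (PI f) = (\<exists>i. src E (f i) \<in> H)"

lemma inH_shift:
  assumes her: "hereditary E H" and x: "x \<in> boundary E"
  shows "inH E H (shift E x) = inH E H x"
proof (cases x)
  case (PV v) then show ?thesis by simp
next
  case (PF es) then show ?thesis by (cases es rule: list_cases3) auto
next
  case (PI f)
  have "inf_path E f" using x PI by (auto simp: boundary_def)
  then have "src E (f 0) \<in> H \<Longrightarrow> src E (f (Suc 0)) \<in> H" using her
    by (auto simp: inf_path_def hereditary_def)
  then show ?thesis using PI by (auto, metis not0_implies_Suc)
qed

lemma inH_shift_pow:
  assumes her: "hereditary E H" and x: "x \<in> boundary E"
  shows "inH E H ((shift E ^^ n) x) = inH E H x"
proof (induction n)
  case (Suc n)
  then show ?case using inH_shift[OF her shift_pow_boundary[OF x, of n]] by simp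
qed simp

lemma inH_rel:
  assumes her: "hereditary E H" and r: "(a, b) \<in> shift_tail E"
  shows "inH E H a = inH E H b"
proof -
  from r obtain m n where "a \<in> boundary E" "b \<in> boundary E" "(shift E ^^ m) a = (shift E ^^ n) b"
    by (auto simp: shift_tail_def)
  then show ?thesis using inH_shift_pow[OF her] by metis
qed

lemma split_classes:
  assumes her: "hereditary E H"
  shows "boundary_classes E = {a \<in> boundary E. inH E H a} // shift_tail E \<union> {a \<in> boundary E. \<not> inH E H a} // shift_tail E"
    and "{a \<in> boundary E. inH E H a} // shift_tail E \<inter> {a \<in> boundary E. \<not> inH E H a} // shift_tail E = {}"
proof -
  have "boundary E = {a \<in> boundary E. inH E H a} \<union> {a \<in> boundary E. \<not> inH E H a}" by blast
  then show "boundary_classes E = {a \<in> boundary E. inH E H a} // shift_tail E \<union> {a \<in> boundary E. \<not> inH E H a} // shift_tail E"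
    unfolding boundary_classes_def quotient_def by blast
  show "{a \<in> boundary E. inH E H a} // shift_tail E \<inter> {a \<in> boundary E. \<not> inH E H a} // shift_tail E = {}"
  proof (rule ccontr)
    assume "\<not> ?thesis"
    then obtain a b where a: "a \<in> boundary E" "inH E H a" and b: "b \<in> boundary E" "\<not> inH E H b"
      and e: "shift_tail E `` {a} = shift_tail E `` {b}"
      by (auto simp: quotient_def)
    have "a \<in> shift_tail E `` {a}" using shift_tail_refl[OF a(1)] by simp
    then have "(b, a) \<in> shift_tail E" using e by simp
    then show False using inH_rel[OF her] a b by blast
  qed
qed



definition uns :: "'a + 'a \<Rightarrow> 'a" where "uns x = (case x of Inl a \<Rightarrow> a | Inr a \<Rightarrow> a)"

lemma uns_simps[simp]: "uns (Inl a) = a" "uns (Inr a) = a" by (auto simp: uns_def)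

fun piQ :: "('v + 'v, 'e + 'e) bpath \<Rightarrow> ('v, 'e) bpath" where
  "piQ (PV x) = PV (uns x)"
| "piQ (PF es) = PF (map uns es)"
| "piQ (PI f) = PI (uns \<circ> f)"

definition lastlift :: "('v,'e) dgraph \<Rightarrow> 'v set \<Rightarrow> 'e \<Rightarrow> 'e + 'e" where
  "lastlift E H e = (if rng E e \<in> breaking E H then Inr e else Inl e)"

fun liftL :: "('v,'e) dgraph \<Rightarrow> 'v set \<Rightarrow> 'e list \<Rightarrow> ('e + 'e) list" where
  "liftL E H [] = []"
| "liftL E H [e] = [lastlift E H e]"
| "liftL E H (e # e' # es) = Inl e # liftL E H (e' # es)"

fun fQ :: "('v,'e) dgraph \<Rightarrow> 'v set \<Rightarrow> ('v, 'e) bpath \<Rightarrow> ('v + 'v, 'e + 'e) bpath" where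
  "fQ E H (PV v) = PV (if v \<in> breaking E H then Inr v else Inl v)"
| "fQ E H (PF es) = PF (liftL E H es)"
| "fQ E H (PI f) = PI (Inl \<circ> f)"

lemma Q_simps:
  "verts (quot_graph E H) = Inl ` (verts E - H) \<union> Inr ` breaking E H"
  "edges (quot_graph E H) = Inl ` {e \<in> edges E. rng E e \<notin> H} \<union> Inr ` {e \<in> edges E. rng E e \<in> breaking E H}"
  "rng (quot_graph E H) (Inl e) = Inl (rng E e)"
  "rng (quot_graph E H) (Inr e) = Inr (rng E e)"
  "src (quot_graph E H) x = Inl (src E (uns x))"
  by (auto simp: quot_graph_def split: sum.splits)

lemma uns_rngQ[simp]: "uns (rng (quot_graph E H) x) = rng E (uns x)"
  by (cases x) (auto simp: Q_simps)

lemma breaking_notH: "hereditary E H \<Longrightarrow> v \<in> breaking E H \<Longrightarrow> v \<notin> H"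
  by (auto simp: breaking_def hereditary_def emits_def)

lemma breaking_sing: "v \<in> breaking E H \<Longrightarrow> singular E v"
  by (auto simp: breaking_def)

lemma q_sing_Inr: "singular (quot_graph E H) (Inr v) \<longleftrightarrow> v \<in> breaking E H"
  by (auto simp: singular_def emits_def Q_simps)

lemma q_emits_Inl:
  "emits (quot_graph E H) (Inl v) = Inl ` {e \<in> emits E v. rng E e \<notin> H} \<union> Inr ` {e \<in> emits E v. rng E e \<in> breaking E H}"
  by (auto simp: emits_def Q_simps)

lemma q_sing_Inl:
  assumes her: "hereditary E H" and sat: "saturated E H"
  shows "singular (quot_graph E H) (Inl v) \<longleftrightarrow> v \<in> verts E \<and> v \<notin> H \<and> singular E v \<and> v \<notin> breaking E H"
proof -
  define N where "N = {e \<in> emits E v. rng E e \<notin> H}"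
  define Bv where "Bv = {e \<in> emits E v. rng E e \<in> breaking E H}"
  have BN: "Bv \<subseteq> N" using breaking_notH[OF her] by (auto simp: N_def Bv_def)
  have em: "emits (quot_graph E H) (Inl v) = Inl ` N \<union> Inr ` Bv" unfolding q_emits_Inl N_def Bv_def ..
  have e1: "emits (quot_graph E H) (Inl v) = {} \<longleftrightarrow> N = {}" using em BN by auto
  have e2: "finite (emits (quot_graph E H) (Inl v)) \<longleftrightarrow> finite N" using em BN
    by (auto intro: finite_subset dest: finite_imageD)
  have vq: "Inl v \<in> verts (quot_graph E H) \<longleftrightarrow> v \<in> verts E \<and> v \<notin> H" by (auto simp: Q_simps)
  have br: "v \<in> breaking E H \<longleftrightarrow> singular E v \<and> N \<noteq> {} \<and> finite N" by (simp add: breaking_def N_def)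
  have "singular (quot_graph E H) (Inl v) \<longleftrightarrow> v \<in> verts E \<and> v \<notin> H \<and> (N = {} \<or> infinite N)"
    unfolding singular_def using vq e1 e2 by blast
  also have "\<dots> \<longleftrightarrow> v \<in> verts E \<and> v \<notin> H \<and> singular E v \<and> v \<notin> breaking E H"
  proof
    assume a: "v \<in> verts E \<and> v \<notin> H \<and> (N = {} \<or> infinite N)"
    have "singular E v"
    proof (rule ccontr)
      assume ns: "\<not> singular E v"
      then have reg: "regular E v" using a by (simp add: regular_def)
      show False
      proof (cases "N = {}")
        case True
        then have "rng E ` emits E v \<subseteq> H" by (auto simp: N_def)
        then show False using sat reg a unfolding saturated_def by blast
      next
        case False
        then have "infinite N" using a by blast
        then have "infinite (emits E v)" unfolding N_def by (auto intro: finite_subset)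
        then show False using ns a by (simp add: singular_def)
      qed
    qed
    then show "v \<in> verts E \<and> v \<notin> H \<and> singular E v \<and> v \<notin> breaking E H" using a br by auto
  next
    assume "v \<in> verts E \<and> v \<notin> H \<and> singular E v \<and> v \<notin> breaking E H"
    then show "v \<in> verts E \<and> v \<notin> H \<and> (N = {} \<or> infinite N)" using br by auto
  qed
  finally show ?thesis .
qed


lemma piQ_shift: "piQ (shift (quot_graph E H) x) = shift E (piQ x)"
proof (cases x)
  case (PF es) then show ?thesis by (cases es rule: list_cases3) auto
qed (auto simp: comp_def)

lemma piQ_shift_pow: "piQ ((shift (quot_graph E H) ^^ n) x) = (shift E ^^ n) (piQ x)"
  by (induction n) (auto simp: piQ_shift)

lemma q_edge:
  assumes wf: "wf_graph E" and her: "hereditary E H" and x: "x \<in> edges (quot_graph E H)"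
  shows "uns x \<in> edges E" "rng E (uns x) \<notin> H" "src E (uns x) \<notin> H" "src E (uns x) \<in> verts E"
  using x breaking_notH[OF her] wf her by (auto simp: Q_simps wf_graph_def hereditary_def)

lemma q_fin_path:
  assumes wf: "wf_graph E" and her: "hereditary E H"
  shows "fin_path (quot_graph E H) es \<Longrightarrow> fin_path E (map uns es)"
proof (induction es rule: induct_list012)
  case (3 x y zs)
  have "uns (rng (quot_graph E H) x) = uns (src (quot_graph E H) y)" using 3(3) by simp
  then show ?case using 3 q_edge[OF wf her] by (simp add: Q_simps)
qed (auto simp: q_edge[OF wf her])

lemma q_inl_of_rng: "rng (quot_graph E H) x = Inl v \<Longrightarrow> x = Inl (uns x)"
  by (cases x) (auto simp: Q_simps)

lemma q_fQ_PF:
  assumes wf: "wf_graph E" and her: "hereditary E H" and sat: "saturated E H"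
  shows "fin_path (quot_graph E H) es \<Longrightarrow> singular (quot_graph E H) (rng (quot_graph E H) (last es)) \<Longrightarrow> liftL E H (map uns es) = es"
proof (induction es rule: induct_list012)
  case (2 x)
  show ?case
  proof (cases x)
    case (Inl e)
    then show ?thesis using 2 q_sing_Inl[OF her sat] by (auto simp: lastlift_def Q_simps)
  next
    case (Inr e)
    then show ?thesis using 2 by (auto simp: lastlift_def Q_simps)
  qed
next
  case (3 x y zs)
  have "rng (quot_graph E H) x = Inl (src E (uns y))" using 3(3) by (simp add: Q_simps)
  then have "x = Inl (uns x)" by (rule q_inl_of_rng)
  then show ?case using 3 by simp
qed simp

lemma q_PI_Inl:
  assumes "inf_path (quot_graph E H) f" shows "f i = Inl (uns (f i))"
proof -
  have "rng (quot_graph E H) (f i) = Inl (src E (uns (f (Suc i))))" using assms by (simp add: inf_path_def Q_simps)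
  then show ?thesis by (rule q_inl_of_rng)
qed

lemma Q2_Q3:
  assumes wf: "wf_graph E" and her: "hereditary E H" and sat: "saturated E H"
    and q: "q \<in> boundary (quot_graph E H)"
  shows "piQ q \<in> boundary E" "\<not> inH E H (piQ q)" "fQ E H (piQ q) = q"
proof -
  have "piQ q \<in> boundary E \<and> \<not> inH E H (piQ q) \<and> fQ E H (piQ q) = q"
  proof (cases q)
    case (PV x)
    then have s: "singular (quot_graph E H) x" using q by (auto simp: boundary_def)
    show ?thesis
    proof (cases x)
      case (Inl v) then show ?thesis using s PV q_sing_Inl[OF her sat] by (auto simp: boundary_def)
    next
      case (Inr v) then show ?thesis using s PV breaking_notH[OF her] breaking_sing
        by (auto simp: boundary_def q_sing_Inr)
    qed
  next
    case (PF es)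
    then have fp: "fin_path (quot_graph E H) es" and s: "singular (quot_graph E H) (rng (quot_graph E H) (last es))"
      using q by (auto simp: boundary_def)
    have ne: "es \<noteq> []" using fp by auto
    have l: "rng E (last (map uns es)) = uns (rng (quot_graph E H) (last es))" using ne by (simp add: last_map)
    have s2: "singular E (rng E (last (map uns es))) \<and> rng E (last (map uns es)) \<notin> H"
    proof (cases "rng (quot_graph E H) (last es)")
      case (Inl v) then show ?thesis using l s q_sing_Inl[OF her sat] by auto
    next
      case (Inr v) then show ?thesis using l s breaking_notH[OF her] breaking_sing by (auto simp: q_sing_Inr)
    qed
    show ?thesis using PF q_fin_path[OF wf her fp] s2 q_fQ_PF[OF wf her sat fp s]
      by (auto simp: boundary_def)
  next
    case (PI f)
    then have ip: "inf_path (quot_graph E H) f" using q by (auto simp: boundary_def)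
    have "inf_path E (uns \<circ> f)" using ip q_edge[OF wf her] unfolding inf_path_def
      by (metis comp_apply uns_rngQ Q_simps(5) uns_simps(1))
    moreover have "\<forall>i. src E (uns (f i)) \<notin> H" using ip q_edge[OF wf her] by (auto simp: inf_path_def)
    moreover have "Inl \<circ> (uns \<circ> f) = f" using q_PI_Inl[OF ip] by (auto simp: fun_eq_iff)
    ultimately show ?thesis using PI by (auto simp: boundary_def)
  qed
  then show "piQ q \<in> boundary E" "\<not> inH E H (piQ q)" "fQ E H (piQ q) = q" by auto
qed


lemma all_notH:
  assumes her: "hereditary E H"
  shows "fin_path E es \<Longrightarrow> rng E (last es) \<notin> H \<Longrightarrow> \<forall>e\<in>set es. rng E e \<notin> H"
proof (induction es rule: induct_list012)
  case (3 x y zs)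
  have a1: "\<forall>e\<in>set (y#zs). rng E e \<notin> H" using 3 by auto
  have a2: "y \<in> edges E" "rng E x = src E y" using 3(3) unfolding fin_path_Cons2 by (auto simp: fin_path_def)
  note a = a1 a2
  then have "rng E x \<notin> H" using her unfolding hereditary_def by auto
  then show ?case using a by simp
qed auto

lemma map_uns_liftL: "map uns (liftL E H es) = es"
  by (induction E H es rule: liftL.induct) (auto simp: lastlift_def)

lemma liftL_Nil[simp]: "liftL E H es = [] \<longleftrightarrow> es = []"
  by (induction E H es rule: liftL.induct) auto

lemma sing_verts: "singular E v \<Longrightarrow> v \<in> verts E" by (simp add: singular_def)

lemma last_liftL: "es \<noteq> [] \<Longrightarrow> last (liftL E H es) = lastlift E H (last es)"
  by (induction E H es rule: liftL.induct) auto

lemma liftL_Cons: obtains b rest where "liftL E H (y#zs) = b # rest" "uns b = y"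
  by (cases zs) (auto simp: lastlift_def)

lemma lastlift_edge: "e \<in> edges E \<Longrightarrow> rng E e \<notin> H \<Longrightarrow> lastlift E H e \<in> edges (quot_graph E H)"
  by (auto simp: lastlift_def Q_simps)

lemma liftL_fin:
  shows "fin_path E es \<Longrightarrow> \<forall>e\<in>set es. rng E e \<notin> H \<Longrightarrow> fin_path (quot_graph E H) (liftL E H es)"
proof (induction es rule: induct_list012)
  case (2 x) then show ?case by (auto intro: lastlift_edge)
next
  case (3 x y zs)
  obtain b rest where br: "liftL E H (y#zs) = b # rest" "uns b = y" by (rule liftL_Cons)
  have "fin_path (quot_graph E H) (liftL E H (y#zs))" using 3 by auto
  moreover have "Inl x \<in> edges (quot_graph E H)" using 3 by (auto simp: Q_simps)
  moreover have "rng (quot_graph E H) (Inl x) = src (quot_graph E H) b" using 3 br by (auto simp: Q_simps)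
  ultimately show ?case using br by simp
qed auto

lemma lastlift_sing:
  assumes her: "hereditary E H" and sat: "saturated E H"
    and "singular E (rng E e)" "rng E e \<notin> H"
  shows "singular (quot_graph E H) (rng (quot_graph E H) (lastlift E H e))"
  using assms q_sing_Inl[OF her sat] sing_verts[OF assms(3)] by (auto simp: lastlift_def Q_simps q_sing_Inr)

lemma Q4:
  assumes wf: "wf_graph E" and her: "hereditary E H" and sat: "saturated E H"
    and a: "a \<in> boundary E" "\<not> inH E H a"
  shows "fQ E H a \<in> boundary (quot_graph E H)" "piQ (fQ E H a) = a"
proof -
  have "fQ E H a \<in> boundary (quot_graph E H) \<and> piQ (fQ E H a) = a"
  proof (cases a)
    case (PV v)
    then show ?thesis using a q_sing_Inl[OF her sat] sing_verts by (auto simp: boundary_def q_sing_Inr)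
  next
    case (PF es)
    then have fp: "fin_path E es" "singular E (rng E (last es))" "rng E (last es) \<notin> H" using a by (auto simp: boundary_def)
    have ne: "es \<noteq> []" using fp by auto
    have "fin_path (quot_graph E H) (liftL E H es)" using liftL_fin all_notH[OF her] fp by blast
    moreover have "singular (quot_graph E H) (rng (quot_graph E H) (last (liftL E H es)))"
      unfolding last_liftL[OF ne] by (rule lastlift_sing[OF her sat fp(2,3)])
    ultimately show ?thesis using PF by (auto simp: boundary_def map_uns_liftL)
  next
    case (PI f)
    then have ip: "inf_path E f" "\<forall>i. src E (f i) \<notin> H" using a by (auto simp: boundary_def)
    have "inf_path (quot_graph E H) (Inl \<circ> f)" using ip unfolding inf_path_def by (auto simp: Q_simps)
    then show ?thesis using PI by (auto simp: boundary_def comp_def)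
  qed
  then show "fQ E H a \<in> boundary (quot_graph E H)" "piQ (fQ E H a) = a" by auto
qed

lemma Q_part:
  assumes wf: "wf_graph E" and her: "hereditary E H" and sat: "saturated E H"
  shows "boundary_classes (quot_graph E H) \<approx> {a \<in> boundary E. \<not> inH E H a} // shift_tail E"
  unfolding boundary_classes_def
proof (rule quot_eqpoll[where g = piQ, OF equiv_shift_tail equiv_shift_tail])
  show "{a \<in> boundary E. \<not> inH E H a} \<subseteq> boundary E" by blast
  show "piQ ` boundary (quot_graph E H) \<subseteq> {a \<in> boundary E. \<not> inH E H a}"
    using Q2_Q3[OF wf her sat] by blast
  fix b b' assume b: "b \<in> boundary (quot_graph E H)" and b': "b' \<in> boundary (quot_graph E H)"
  show "(b, b') \<in> shift_tail (quot_graph E H) \<longleftrightarrow> (piQ b, piQ b') \<in> shift_tail E"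
  proof
    assume "(b, b') \<in> shift_tail (quot_graph E H)"
    then obtain m n where "(shift (quot_graph E H) ^^ m) b = (shift (quot_graph E H) ^^ n) b'"
      by (auto simp: shift_tail_def)
    then have "(shift E ^^ m) (piQ b) = (shift E ^^ n) (piQ b')" by (metis piQ_shift_pow)
    then show "(piQ b, piQ b') \<in> shift_tail E" using Q2_Q3[OF wf her sat] b b' by (auto simp: shift_tail_def)
  next
    assume "(piQ b, piQ b') \<in> shift_tail E"
    then obtain m n where "(shift E ^^ m) (piQ b) = (shift E ^^ n) (piQ b')"
      by (auto simp: shift_tail_def)
    then have "piQ ((shift (quot_graph E H) ^^ m) b) = piQ ((shift (quot_graph E H) ^^ n) b')" by (metis piQ_shift_pow)
    then have "fQ E H (piQ ((shift (quot_graph E H) ^^ m) b)) = fQ E H (piQ ((shift (quot_graph E H) ^^ n) b'))" by simp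
    then have "(shift (quot_graph E H) ^^ m) b = (shift (quot_graph E H) ^^ n) b'"
      using Q2_Q3(3)[OF wf her sat shift_pow_boundary[OF b]] Q2_Q3(3)[OF wf her sat shift_pow_boundary[OF b']] by simp
    then show "(b, b') \<in> shift_tail (quot_graph E H)" using b b' by (auto simp: shift_tail_def)
  qed
next
  fix a assume a: "a \<in> {a \<in> boundary E. \<not> inH E H a}"
  then have "fQ E H a \<in> boundary (quot_graph E H)" "piQ (fQ E H a) = a" using Q4[OF wf her sat] by auto
  moreover have "(a, a) \<in> shift_tail E" using a shift_tail_refl by blast
  ultimately show "\<exists>b\<in>boundary (quot_graph E H). (piQ b, a) \<in> shift_tail E" by metis
qed



fun iL :: "('v, 'e) bpath \<Rightarrow> ('v + 'b, 'e + 'c) bpath" where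
  "iL (PV v) = PV (Inl v)"
| "iL (PF es) = PF (map Inl es)"
| "iL (PI f) = PI (Inl \<circ> f)"

fun pL :: "('v + 'b, 'e + 'c) bpath \<Rightarrow> ('v, 'e) bpath" where
  "pL (PV x) = PV (projl x)"
| "pL (PF es) = PF (map projl es)"
| "pL (PI f) = PI (projl \<circ> f)"

lemma pL_iL[simp]: "pL (iL c) = c"
  by (cases c) (auto simp: comp_def map_idI)

lemma R_simps:
  "verts (restr_graph E H) = Inl ` H \<union> Inr ` F1 E H"
  "edges (restr_graph E H) = Inl ` {e \<in> edges E. src E e \<in> H} \<union> Inr ` F1 E H"
  "rng (restr_graph E H) (Inl e) = Inl (rng E e)"
  "rng (restr_graph E H) (Inr a) = Inl (rng E (last a))"
  "src (restr_graph E H) (Inl e) = Inl (src E e)"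
  "src (restr_graph E H) (Inr a) = Inr a"
  by (auto simp: restr_graph_def)

lemma rngR_isl: "isl (rng (restr_graph E H) x)"
  by (cases x) (auto simp: R_simps)

lemma iL_shift: "shift (restr_graph E H) (iL c) = iL (shift E c)"
proof (cases c)
  case (PF es) then show ?thesis by (cases es rule: list_cases3) (auto simp: R_simps)
qed (auto simp: comp_def)

lemma iL_shift_pow: "(shift (restr_graph E H) ^^ n) (iL c) = iL ((shift E ^^ n) c)"
  by (induction n) (auto simp: iL_shift)

lemma r_sing_Inl:
  assumes her: "hereditary E H"
  shows "singular (restr_graph E H) (Inl v) \<longleftrightarrow> v \<in> H \<and> singular E v"
proof -
  have "v \<in> H \<Longrightarrow> emits (restr_graph E H) (Inl v) = Inl ` emits E v"
    by (auto simp: emits_def R_simps)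
  moreover have "v \<in> H \<Longrightarrow> v \<in> verts E" using her by (auto simp: hereditary_def)
  ultimately show ?thesis by (auto simp: singular_def R_simps finite_image_iff)
qed

lemma r_notsing_Inr: "\<not> singular (restr_graph E H) (Inr a)"
proof
  assume s: "singular (restr_graph E H) (Inr a)"
  then have "a \<in> F1 E H" by (auto simp: singular_def R_simps)
  then have "emits (restr_graph E H) (Inr a) = {Inr a}"
    by (auto simp: emits_def R_simps)
  then show False using s by (simp add: singular_def)
qed

lemma r_sing: "hereditary E H \<Longrightarrow> singular (restr_graph E H) x \<Longrightarrow> \<exists>v. x = Inl v \<and> v \<in> H \<and> singular E v"
  by (cases x) (auto simp: r_sing_Inl r_notsing_Inr)

lemma r_isl_tail:
  assumes "fin_path (restr_graph E H) (x # ys)" "y \<in> set ys"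
  shows "isl y"
proof -
  obtain i where i: "i < length ys" "ys ! i = y" using assms(2) by (auto simp: in_set_conv_nth)
  then have "rng (restr_graph E H) ((x#ys) ! i) = src (restr_graph E H) y"
    using assms(1) unfolding fin_path_def by (metis length_Cons nth_Cons_Suc Suc_less_eq)
  then show ?thesis using rngR_isl[of E H "(x#ys) ! i"] by (cases y) (auto simp: R_simps)
qed

lemma r_fin_map_Inl:
  "fin_path (restr_graph E H) (map Inl es) \<longleftrightarrow> fin_path E es \<and> (\<forall>e\<in>set es. src E e \<in> H)"
  unfolding fin_path_def by (auto simp: R_simps)

lemma R3:
  assumes her: "hereditary E H" and b: "b \<in> boundary (restr_graph E H)"
  shows "\<exists>c. shift (restr_graph E H) b = iL c \<and> c \<in> boundary E \<and> inH E H c"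
proof (cases b)
  case (PV x)
  then obtain v where "x = Inl v" "v \<in> H" "singular E v" using b r_sing[OF her] by (auto simp: boundary_def)
  then show ?thesis using PV by (auto simp: boundary_def intro!: exI[of _ "PV v"])
next
  case (PF es)
  then have fp: "fin_path (restr_graph E H) es" and s: "singular (restr_graph E H) (rng (restr_graph E H) (last es))"
    using b by (auto simp: boundary_def)
  show ?thesis
  proof (cases es rule: list_cases3)
    case 1 then show ?thesis using fp by simp
  next
    case (2 x)
    then obtain v where "rng (restr_graph E H) x = Inl v" "v \<in> H" "singular E v" using s r_sing[OF her] by auto
    then show ?thesis using PF 2 by (auto simp: boundary_def intro!: exI[of _ "PV v"])
  next
    case (3 x y zs)
    define ys where "ys = y # zs"
    have "\<forall>u\<in>set ys. isl u" using r_isl_tail fp 3 unfolding ys_def by blast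
    then have ys: "ys = map Inl (map projl ys)" by (induction ys) auto
    define es' where "es' = map projl ys"
    have fp2: "fin_path (restr_graph E H) ys" using fp 3 unfolding ys_def by simp
    then have fp3: "fin_path E es'" "\<forall>e\<in>set es'. src E e \<in> H" using ys r_fin_map_Inl unfolding es'_def by metis+
    have ne: "es' \<noteq> []" unfolding es'_def ys_def by simp
    have "last es = Inl (last es')" using ys ne unfolding 3 es'_def ys_def
      by (metis last_ConsR last_map list.simps(3) map_is_Nil_conv)
    then have "singular (restr_graph E H) (Inl (rng E (last es')))" using s by (simp add: R_simps)
    then have "singular E (rng E (last es'))" "rng E (last es') \<in> H" using r_sing_Inl[OF her] by auto
    moreover have "shift (restr_graph E H) b = iL (PF es')" using PF 3 ys unfolding es'_def ys_def by simp
    ultimately show ?thesis using fp3 by (auto simp: boundary_def intro!: exI[of _ "PF es'"])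
  qed
next
  case (PI f)
  then have ip: "inf_path (restr_graph E H) f" using b by (auto simp: boundary_def)
  have isl: "isl (f (Suc i))" for i
  proof -
    have "rng (restr_graph E H) (f i) = src (restr_graph E H) (f (Suc i))" using ip by (simp add: inf_path_def)
    then show ?thesis using rngR_isl[of E H "f i"] by (cases "f (Suc i)") (auto simp: R_simps)
  qed
  define g where "g = projl \<circ> f \<circ> Suc"
  have fg: "f (Suc i) = Inl (g i)" for i using isl[of i] unfolding g_def by (cases "f (Suc i)") auto
  have "inf_path E g \<and> (\<forall>i. src E (g i) \<in> H)"
  proof -
    have e: "g i \<in> edges E \<and> src E (g i) \<in> H" for i
    proof -
      have "f (Suc i) \<in> edges (restr_graph E H)" using ip by (simp add: inf_path_def)
      then show ?thesis unfolding fg R_simps by auto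
    qed
    have c: "rng E (g i) = src E (g (Suc i))" for i
    proof -
      have "rng (restr_graph E H) (f (Suc i)) = src (restr_graph E H) (f (Suc (Suc i)))" using ip by (simp add: inf_path_def)
      then show ?thesis unfolding fg R_simps by simp
    qed
    show ?thesis using e c by (simp add: inf_path_def)
  qed
  moreover have "shift (restr_graph E H) b = iL (PI g)" using PI fg by (auto simp: fun_eq_iff)
  ultimately show ?thesis by (auto simp: boundary_def intro!: exI[of _ "PI g"])
qed


lemma shift_len_PF: "es \<noteq> [] \<Longrightarrow> (shift E ^^ length es) (PF es) = PV (rng E (last es))"
proof (induction es rule: induct_list012)
  case (3 x y zs)
  have "(shift E ^^ length (x#y#zs)) (PF (x#y#zs)) = (shift E ^^ length (y#zs)) (shift E (PF (x#y#zs)))"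
    by (simp only: length_Cons funpow_Suc_right comp_apply)
  then show ?case using 3 by simp
qed auto

lemma shift_pow_PI: "(shift E ^^ i) (PI f) = PI (\<lambda>j. f (j + i))"
  by (induction i) auto

lemma R4:
  assumes her: "hereditary E H" and a: "a \<in> boundary E" "inH E H a"
  shows "\<exists>k. iL ((shift E ^^ k) a) \<in> boundary (restr_graph E H)"
proof (cases a)
  case (PV v)
  then have "iL ((shift E ^^ 0) a) \<in> boundary (restr_graph E H)"
    using a r_sing_Inl[OF her] by (auto simp: boundary_def)
  then show ?thesis by blast
next
  case (PF es)
  then have ne: "es \<noteq> []" and s: "singular E (rng E (last es))" and h: "rng E (last es) \<in> H"
    using a by (auto simp: boundary_def)
  have eq: "(shift E ^^ length es) a = PV (rng E (last es))" using shift_len_PF[OF ne] PF by simp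
  have "iL ((shift E ^^ length es) a) \<in> boundary (restr_graph E H)"
    unfolding eq using s h r_sing_Inl[OF her] by (auto simp: boundary_def)
  then show ?thesis by blast
next
  case (PI f)
  then have ip: "inf_path E f" and h: "\<exists>i. src E (f i) \<in> H" using a by (auto simp: boundary_def)
  then obtain i where i: "src E (f i) \<in> H" by blast
  have hj: "src E (f (j + i)) \<in> H" for j
  proof (induction j)
    case (Suc j)
    then have "rng E (f (j + i)) \<in> H" using ip her by (auto simp: inf_path_def hereditary_def)
    then show ?case using ip by (simp add: inf_path_def)
  qed (simp add: i)
  have "inf_path (restr_graph E H) (Inl \<circ> (\<lambda>j. f (j + i)))"
    using ip hj unfolding inf_path_def by (auto simp: R_simps)
  then have "iL ((shift E ^^ i) a) \<in> boundary (restr_graph E H)"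
    using PI by (simp add: shift_pow_PI boundary_def)
  then show ?thesis by blast
qed

lemma R_part:
  assumes wf: "wf_graph E" and her: "hereditary E H"
  shows "boundary_classes (restr_graph E H) \<approx> {a \<in> boundary E. inH E H a} // shift_tail E"
  unfolding boundary_classes_def
proof (rule quot_eqpoll[where g = "\<lambda>b. pL (shift (restr_graph E H) b)", OF equiv_shift_tail equiv_shift_tail])
  let ?R = "restr_graph E H"
  have G: "shift ?R b = iL (pL (shift ?R b)) \<and> pL (shift ?R b) \<in> boundary E \<and> inH E H (pL (shift ?R b))"
    if "b \<in> boundary ?R" for b
    using R3[OF her that] by auto
  show "{a \<in> boundary E. inH E H a} \<subseteq> boundary E" by blast
  show "(\<lambda>b. pL (shift ?R b)) ` boundary ?R \<subseteq> {a \<in> boundary E. inH E H a}"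
    using G by blast
  fix b b' assume b: "b \<in> boundary ?R" and b': "b' \<in> boundary ?R"
  note Gb = G[OF b] and Gb' = G[OF b']
  show "(b, b') \<in> shift_tail ?R \<longleftrightarrow> (pL (shift ?R b), pL (shift ?R b')) \<in> shift_tail E"
  proof
    assume "(b, b') \<in> shift_tail ?R"
    then obtain m n where "(shift ?R ^^ m) b = (shift ?R ^^ n) b'"
      by (auto simp: shift_tail_def)
    then have "(shift ?R ^^ m) (shift ?R b) = (shift ?R ^^ n) (shift ?R b')"
      by (metis funpow_swap1)
    then have "(shift ?R ^^ m) (iL (pL (shift ?R b))) = (shift ?R ^^ n) (iL (pL (shift ?R b')))"
      using Gb Gb' by simp
    then have "(shift E ^^ m) (pL (shift ?R b)) = (shift E ^^ n) (pL (shift ?R b'))"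
      by (metis iL_shift_pow pL_iL)
    then show "(pL (shift ?R b), pL (shift ?R b')) \<in> shift_tail E" using Gb Gb' by (auto simp: shift_tail_def)
  next
    assume "(pL (shift ?R b), pL (shift ?R b')) \<in> shift_tail E"
    then obtain m n where "(shift E ^^ m) (pL (shift ?R b)) = (shift E ^^ n) (pL (shift ?R b'))"
      by (auto simp: shift_tail_def)
    then have "(shift ?R ^^ m) (iL (pL (shift ?R b))) = (shift ?R ^^ n) (iL (pL (shift ?R b')))"
      by (simp add: iL_shift_pow)
    then have "(shift ?R ^^ m) (shift ?R b) = (shift ?R ^^ n) (shift ?R b')"
      using Gb Gb' by simp
    then have "(shift ?R ^^ Suc m) b = (shift ?R ^^ Suc n) b'"
      by (simp only: funpow_Suc_right comp_apply)
    then have "\<exists>m n. (shift ?R ^^ m) b = (shift ?R ^^ n) b'" by blast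
    then show "(b, b') \<in> shift_tail ?R" using b b' by (simp add: shift_tail_def)
  qed
next
  let ?R = "restr_graph E H"
  fix a assume a: "a \<in> {a \<in> boundary E. inH E H a}"
  then obtain k where k: "iL ((shift E ^^ k) a) \<in> boundary ?R" using R4[OF her] by blast
  have "pL (shift ?R (iL ((shift E ^^ k) a))) = (shift E ^^ Suc k) a"
    by (simp add: iL_shift)
  moreover have "(a, (shift E ^^ Suc k) a) \<in> shift_tail E" using a shift_tail_shift by blast
  then have "((shift E ^^ Suc k) a, a) \<in> shift_tail E" using equiv_shift_tail[of E]
    by (auto simp: equiv_def dest: symD)
  ultimately show "\<exists>b\<in>boundary ?R. (pL (shift ?R b), a) \<in> shift_tail E" using k by metis
qed

theorem lemma6p2:
  fixes E :: "('v, 'e) dgraph" and H :: "'v set"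
  assumes "wf_graph E"
    and "hereditary E H"
    and "saturated E H"
  shows "boundary_classes E \<approx>
           boundary_classes (restr_graph E H) <+> boundary_classes (quot_graph E H)"
proof -
  note sp = split_classes[OF assms(2)]
  have "boundary_classes E \<approx> {a \<in> boundary E. inH E H a} // shift_tail E <+> {a \<in> boundary E. \<not> inH E H a} // shift_tail E"
    unfolding sp(1) by (rule disj_Un_eqpoll_Plus[OF sp(2)])
  also have "\<dots> \<approx> boundary_classes (restr_graph E H) <+> boundary_classes (quot_graph E H)"
    by (rule sum_eqpoll_cong[OF eqpoll_sym[OF R_part[OF assms(1,2)]] eqpoll_sym[OF Q_part[OF assms]]])
  finally show ?thesis .
qed


end
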